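(* Let $\mathcal X$ be a barreled topological real vector space, $\sigma$ a symplectic form on $\mathcal X$, $\mathcal X_{\rm bulk}\subset\mathcal X$ a linear subspace, $\mathcal X_{\rm bd}$ a topological real vector space, and $\partial:\mathcal X_{\rm bulk}'\to\mathcal X_{\rm bd}'$ a linear map whose restriction to $\mathcal X'$ is continuous $\mathcal X'\to\mathcal X_{\rm bd}'$. Let $\eta$ be a strictly positive symmetric bilinear form on $\mathcal X$ with $|v_1\cdot\sigma v_2|\le (v_1\cdot\eta v_1)^{1/2}(v_2\cdot\eta v_2)^{1/2}$, such that $\eta:\mathcal X\to\mathcal X'$ is continuous, and such that for every $u\in\mathcal X'$, $\partial u=0$ implies that $u$ vanishes on $\mathcal X_{\rm bulk}$. With $\mathcal X^{\rm cpl},\sigma^{\rm cpl},\mathfrak A_{\rm bulk}=\mathrm{CCR}(\mathcal X_{\rm bulk}^{\rm cl},\sigma^{\rm cpl})$ and $\mathfrak A_{\rm bd}=\mathrm{CCR}\big((\{\partial'f:f\in\mathcal X_{\rm bd}\})^{\rm cl},\sigma^{\rm cpl}\big)$ as in the context, let $\pi$ be any representation of $\mathrm{CCR}(\mathcal X^{\rm cpl},\sigma^{\rm cpl})$ on a Hilbert space (not necessarily related to $\eta$). Then 1. $\pi(\mathfrak A_{\rm bulk})\subset\pi(\mathfrak A_{\rm bd})$ and $\pi(\mathfrak A_{\rm bulk})''\subset\pi(\mathfrak A_{\rm bd})''$ (double commutants); 2. every vector which is cyclic for $\pi(\mathfrak A_{\rm bulk})$ is also cyclic for $\pi(\mathfrak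 A_{\rm bd})$.
   Context: Duals carry the weak$^*$ topology. $\mathcal X^{\rm cpl}$ is the real Hilbert space completion of $\mathcal X$ with respect to the inner product $\eta$, with extended inner product $\eta^{\rm cpl}$, and $\sigma^{\rm cpl}$ is the continuous extension of $\sigma$; closures are in $\mathcal X^{\rm cpl}$. For $\tilde u\in\mathcal X^{\rm cpl}$, $\eta^{\rm cpl}\tilde u\in\mathcal X'$ is $v\mapsto(v\cdot\eta^{\rm cpl}\tilde u)$, and for $f\in\mathcal X_{\rm bd}$, $\partial'f\in\mathcal X^{\rm cpl}$ is the unique element with $(\partial'f\cdot\eta^{\rm cpl}\tilde u)=(\partial(\eta^{\rm cpl}\tilde u))(f)$ for all $\tilde u$. $\mathrm{CCR}(\mathcal Y,\sigma)$ denotes the Weyl CCR $C^*$-algebra generated by $W(v)$, $v\in\mathcal Y$, with $W(v_1)W(v_2)=e^{-\frac i2 v_1\cdot\sigma v_2}W(v_1+v_2)$, $W(v)^*=W(-v)$, $W(0)=1$; for a subspace it means the generated $C^*$-subalgebra. *)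

theory Defs
  imports "HOL-Analysis.Analysis"
begin

definition tvs :: "'a::{real_vector,topological_space} itself \<Rightarrow> bool" where
  "tvs _ \<longleftrightarrow>
     continuous_on UNIV (\<lambda>p::'a \<times> 'a. fst p + snd p) \<and>
     continuous_on UNIV (\<lambda>p::real \<times> 'a. fst p *\<^sub>R snd p)"

definition barrel :: "'a::{real_vector,topological_space} set \<Rightarrow> bool" where
  "barrel B \<longleftrightarrow> closed B \<and> convex B \<and>
     (\<forall>x\<in>B. \<forall>c::real. \<bar>c\<bar> \<le> 1 \<longrightarrow> c *\<^sub>R x \<in> B) \<and>
     (\<forall>x. \<exists>r>0. \<forall>c::real. \<bar>c\<bar> \<le> r \<longrightarrow> c *\<^sub>R x \<in> B)"

definition barreled :: "'a::{real_vector,topological_space} itself \<Rightarrow> bool" where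
  "barreled T \<longleftrightarrow> tvs T \<and>
     (\<forall>B::'a set. barrel B \<longrightarrow> (\<exists>U. open U \<and> 0 \<in> U \<and> U \<subseteq> B))"

text \<open>Continuous linear functionals on a linear subspace S (subspace topology),
  normalised to vanish outside S.  cdual UNIV is the topological dual.\<close>
definition cdual :: "'a::{real_vector,topological_space} set \<Rightarrow> ('a \<Rightarrow> real) set" where
  "cdual S = {u. (\<forall>x\<in>S. \<forall>y\<in>S. \<forall>a b. u (a *\<^sub>R x + b *\<^sub>R y) = a * u x + b * u y) \<and>
                 continuous_on S u \<and> (\<forall>x. x \<notin> S \<longrightarrow> u x = 0)}"

definition weak_star :: "('a \<Rightarrow> real) set \<Rightarrow> ('a \<Rightarrow> real) topology" where
  "weak_star D = subtopology (product_topology (\<lambda>_. euclideanreal) UNIV) D"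

definition restr :: "'a set \<Rightarrow> ('a \<Rightarrow> real) \<Rightarrow> ('a \<Rightarrow> real)" where
  "restr S u = (\<lambda>x. if x \<in> S then u x else 0)"

definition symplectic_form :: "('a::real_vector \<Rightarrow> 'a \<Rightarrow> real) \<Rightarrow> bool" where
  "symplectic_form \<sigma> \<longleftrightarrow>
     (\<forall>w. linear (\<lambda>v. \<sigma> v w)) \<and> (\<forall>v. linear (\<sigma> v)) \<and>
     (\<forall>v w. \<sigma> v w = - \<sigma> w v) \<and>
     (\<forall>v. (\<forall>w. \<sigma> v w = 0) \<longrightarrow> v = 0)"

definition strictly_pos_sym_form :: "('a::real_vector \<Rightarrow> 'a \<Rightarrow> real) \<Rightarrow> bool" where
  "strictly_pos_sym_form \<eta> \<longleftrightarrow>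
     (\<forall>w. linear (\<lambda>v. \<eta> v w)) \<and> (\<forall>v. linear (\<eta> v)) \<and>
     (\<forall>v w. \<eta> v w = \<eta> w v) \<and> (\<forall>v. v \<noteq> 0 \<longrightarrow> \<eta> v v > 0)"

definition is_completion :: "('a::real_vector \<Rightarrow> 'a \<Rightarrow> real) \<Rightarrow> ('a \<Rightarrow> 'h::{real_inner,complete_space}) \<Rightarrow> bool" where
  "is_completion \<eta> j \<longleftrightarrow> linear j \<and> (\<forall>v w. \<eta> v w = inner (j v) (j w)) \<and> closure (range j) = UNIV"

text \<open>\<partial>'f \<in> X^cpl, characterised by (\<partial>'f . \<eta>^cpl u) = (\<partial>(\<eta>^cpl u))(f)\<close>
definition bdry_dual ::
  "('a \<Rightarrow> 'h::real_inner) \<Rightarrow> 'a set \<Rightarrow> (('a \<Rightarrow> real) \<Rightarrow> ('b \<Rightarrow> real)) \<Rightarrow> 'b \<Rightarrow> 'h" where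
  "bdry_dual j Xb bd f = (THE p. \<forall>u. inner p u = bd (restr Xb (\<lambda>v. inner (j v) u)) f)"

definition complex_structure :: "('k::real_inner \<Rightarrow>\<^sub>L 'k) \<Rightarrow> bool" where
  "complex_structure J \<longleftrightarrow> (\<forall>x. J (J x) = - x) \<and> (\<forall>x y. inner (J x) (J y) = inner x y)"

definition cops :: "('k::real_inner \<Rightarrow>\<^sub>L 'k) \<Rightarrow> ('k \<Rightarrow>\<^sub>L 'k) set" where
  "cops J = {T. T o\<^sub>L J = J o\<^sub>L T}"

definition is_adjoint :: "('k::real_inner \<Rightarrow>\<^sub>L 'k) \<Rightarrow> ('k \<Rightarrow>\<^sub>L 'k) \<Rightarrow> bool" where
  "is_adjoint T S \<longleftrightarrow> (\<forall>x y. inner (T x) y = inner x (S y))"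

definition cstar_gen :: "('k::real_inner \<Rightarrow>\<^sub>L 'k) \<Rightarrow> ('k \<Rightarrow>\<^sub>L 'k) set \<Rightarrow> ('k \<Rightarrow>\<^sub>L 'k) set" where
  "cstar_gen J S = \<Inter>{A. S \<subseteq> A \<and> A \<subseteq> cops J \<and> closed A \<and>
       (\<forall>T\<in>A. \<forall>T'\<in>A. T + T' \<in> A \<and> T o\<^sub>L T' \<in> A) \<and>
       (\<forall>T\<in>A. \<forall>c::real. c *\<^sub>R T \<in> A \<and> J o\<^sub>L T \<in> A) \<and>
       (\<forall>T\<in>A. \<exists>T'\<in>A. is_adjoint T T')}"

definition commutant :: "('k::real_inner \<Rightarrow>\<^sub>L 'k) \<Rightarrow> ('k \<Rightarrow>\<^sub>L 'k) set \<Rightarrow> ('k \<Rightarrow>\<^sub>L 'k) set" where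
  "commutant J S = {T \<in> cops J. \<forall>A\<in>S. T o\<^sub>L A = A o\<^sub>L T}"

definition cyclic_vector :: "('k::real_normed_vector \<Rightarrow>\<^sub>L 'k) set \<Rightarrow> 'k \<Rightarrow> bool" where
  "cyclic_vector A \<xi> \<longleftrightarrow> closure ((\<lambda>T. blinfun_apply T \<xi>) ` A) = UNIV"

text \<open>A representation of CCR(H,\<sigma>c) on the complex Hilbert space (K,J), given by the
  images W v = \<pi>(W(v)) of the Weyl generators; multiplication by i is J.\<close>
definition weyl_rep ::
  "('k::real_inner \<Rightarrow>\<^sub>L 'k) \<Rightarrow> ('h::real_vector \<Rightarrow> 'h \<Rightarrow> real) \<Rightarrow> ('h \<Rightarrow> ('k \<Rightarrow>\<^sub>L 'k)) \<Rightarrow> bool" where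
  "weyl_rep J \<sigma>c W \<longleftrightarrow>
     (\<forall>v. W v \<in> cops J) \<and>
     (\<forall>v1 v2. W v1 o\<^sub>L W v2 =
        cos (\<sigma>c v1 v2 / 2) *\<^sub>R W (v1 + v2) - sin (\<sigma>c v1 v2 / 2) *\<^sub>R (J o\<^sub>L W (v1 + v2))) \<and>
     (\<forall>v. is_adjoint (W v) (W (- v)))"

definition pi_ccr :: "('k::real_inner \<Rightarrow>\<^sub>L 'k) \<Rightarrow> ('h \<Rightarrow> ('k \<Rightarrow>\<^sub>L 'k)) \<Rightarrow> 'h set \<Rightarrow> ('k \<Rightarrow>\<^sub>L 'k) set" where
  "pi_ccr J W Y = cstar_gen J (W ` Y)"

end

theory Submission
  imports Defs
begin

lemma real_aux: fixes a b :: real assumes "b \<ge> 0" "\<And>t. 2*t*a \<le> t^2*b" shows "a = 0"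
proof -
  define t where "t = a/(b+1)"
  have tb: "t*(b+1) = a" unfolding t_def using assms(1) by simp
  have h: "2*t*a \<le> t^2*b" using assms(2) .
  have "(2*t*a)*(b+1)^2 \<le> (t^2*b)*(b+1)^2" using h assms(1) by (intro mult_right_mono) auto
  moreover have "(2*t*a)*(b+1)^2 = 2*a^2*(b+1)" unfolding tb[symmetric] by (simp add: power2_eq_square algebra_simps)
  moreover have "(t^2*b)*(b+1)^2 = a^2*b" unfolding tb[symmetric] by (simp add: power2_eq_square algebra_simps)
  ultimately have "2*a^2*(b+1) \<le> a^2*b" by simp
  then have "a^2*(b+2) \<le> 0" by (simp add: algebra_simps)
  moreover have "a^2*(b+2) \<ge> 0" using assms(1) by simp
  ultimately have "a^2*(b+2) = 0" by linarith
  then show ?thesis using assms(1) by simp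
qed

lemma lin3: fixes A B C d e1 e2 :: real shows "A < d + e1 \<Longrightarrow> B < d + e2 \<Longrightarrow> d \<le> C \<Longrightarrow> 2*A + 2*B - 4*C \<le> 2*(d+e1) + 2*(d+e2) - 4*d"
  by smt

lemma closure_subspace:
  fixes M :: "'a::real_normed_vector set"
  assumes "subspace M" shows "subspace (closure M)"
  unfolding subspace_def
proof (intro conjI ballI allI)
  show "0 \<in> closure M" using assms subspace_0 closure_subset by blast
next
  fix x y assume "x \<in> closure M" "y \<in> closure M"
  then obtain f g where f: "\<forall>n. f n \<in> M" "f \<longlonglongrightarrow> x" and g: "\<forall>n. g n \<in> M" "g \<longlonglongrightarrow> y"
    by (meson closure_sequential)
  have "(\<lambda>n. f n + g n) \<longlonglongrightarrow> x + y" using f g by (intro tendsto_intros)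
  moreover have "\<forall>n. f n + g n \<in> M" using f g assms subspace_add by blast
  ultimately show "x + y \<in> closure M" by (meson closure_sequential)
next
  fix c :: real and x assume "x \<in> closure M"
  then obtain f where f: "\<forall>n. f n \<in> M" "f \<longlonglongrightarrow> x"
    by (meson closure_sequential)
  have "(\<lambda>n. c *\<^sub>R f n) \<longlonglongrightarrow> c *\<^sub>R x" using f by (intro tendsto_intros)
  moreover have "\<forall>n. c *\<^sub>R f n \<in> M" using f assms subspace_scale by blast
  ultimately show "c *\<^sub>R x \<in> closure M" by (meson closure_sequential)
qed

lemma parallelogram:
  fixes x a b :: "'a::real_inner"
  shows "(norm (a - b))^2 = 2*(norm (x - a))^2 + 2*(norm (x - b))^2 - 4*(norm (x - (1/2) *\<^sub>R (a + b)))^2"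
proof -
  have e: "x - (1/2) *\<^sub>R (a + b) = (1/2) *\<^sub>R ((x - a) + (x - b))"
  proof -
    have "x = (1/2) *\<^sub>R x + (1/2) *\<^sub>R x" by (metis scaleR_add_left field_sum_of_halves scaleR_one)
    then show ?thesis by (simp add: algebra_simps)
  qed
  define u where "u = x - a"
  define v where "v = x - b"
  have f: "a - b = v - u" unfolding u_def v_def by simp
  have "(norm (v - u))^2 = 2*(norm u)^2 + 2*(norm v)^2 - 4*(norm ((1/2) *\<^sub>R (u + v)))^2"
  proof -
    have h: "(norm ((1/2) *\<^sub>R (u + v)))^2 = inner (u+v) (u+v) / 4"
      by (simp add: power_divide power2_norm_eq_inner[symmetric])
    show ?thesis unfolding h
      by (simp add: power2_norm_eq_inner inner_diff_left inner_diff_right inner_add_left inner_add_right inner_commute[of v u] field_simps)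
  qed
  then show ?thesis unfolding e f u_def[symmetric] v_def[symmetric] .
qed

lemma projection_exists:
  fixes M :: "'a::{real_inner,complete_space} set"
  assumes cl: "closed M" and sub: "subspace M"
  shows "\<exists>m\<in>M. \<forall>y\<in>M. inner (x - m) y = 0"
proof -
  define S where "S = (\<lambda>y. (norm (x - y))^2) ` M"
  define d where "d = Inf S"
  have Sne: "S \<noteq> {}" using sub subspace_0 S_def by blast
  have Sbd: "bdd_below S" unfolding S_def by (rule bdd_belowI[of _ 0]) auto
  have dle: "d \<le> (norm (x - y))^2" if "y \<in> M" for y
    unfolding d_def using Sbd that S_def by (simp add: cInf_lower)
  have "\<exists>y. y \<in> M \<and> (norm (x - y))^2 < d + 1/(real n + 1)" for n
  proof -
    have "Inf S < d + 1/(real n + 1)" unfolding d_def by (simp add: add_pos_pos)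
    then obtain s where "s \<in> S" "s < d + 1/(real n + 1)" using cInf_less_iff[OF Sne Sbd] by blast
    then show ?thesis unfolding S_def by blast
  qed
  then obtain m where m: "\<And>n. m n \<in> M" "\<And>n. (norm (x - m n))^2 < d + 1/(real n + 1)"
    by metis
  have mid: "(1/2) *\<^sub>R (m k + m n) \<in> M" for k n
    using m(1) sub subspace_add subspace_scale by blast
  have cb: "(norm (m k - m n))^2 \<le> 2/(real k + 1) + 2/(real n + 1)" for k n
  proof -
    have "(norm (m k - m n))^2 = 2*(norm (x - m k))^2 + 2*(norm (x - m n))^2 - 4*(norm (x - (1/2) *\<^sub>R (m k + m n)))^2"
      by (rule parallelogram)
    also have "\<dots> \<le> 2*(d + 1/(real k + 1)) + 2*(d + 1/(real n + 1)) - 4*d"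
      by (rule lin3[OF m(2)[of k] m(2)[of n] dle[OF mid[of k n]]])
    finally show ?thesis by simp
  qed
  have "Cauchy m"
  proof (rule metric_CauchyI)
    fix e :: real assume e: "e > 0"
    obtain N :: nat where N: "4/(e^2) < real N" using reals_Archimedean2 by blast
    have "dist (m k) (m n) < e" if "k \<ge> N" "n \<ge> N" for k n
    proof -
      have e2: "e^2 > 0" using e by simp
      have "2/(real k + 1) \<le> 2/(real N + 1)" "2/(real n + 1) \<le> 2/(real N + 1)"
        using that by (auto intro!: divide_left_mono)
      moreover have "4/(real N + 1) < e^2"
      proof -
        have "4 < real N * e^2" using N e2 by (simp add: divide_less_eq)
        moreover have "(real N + 1) * e^2 = real N * e^2 + e^2" by (simp add: distrib_right)
        ultimately have "4 < (real N + 1) * e^2" using e2 by smt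
        then show ?thesis by (simp add: divide_less_eq mult.commute)
      qed
      ultimately have "(norm (m k - m n))^2 < e^2" using cb[of k n] by linarith
      then show ?thesis using e by (simp add: dist_norm power_less_imp_less_base)
    qed
    then show "\<exists>M. \<forall>m'\<ge>M. \<forall>n\<ge>M. dist (m m') (m n) < e" by blast
  qed
  then obtain p where p: "m \<longlonglongrightarrow> p" using Cauchy_convergent_iff convergent_def by blast
  have pM: "p \<in> M" using closed_sequentially[OF cl m(1) p] .
  have "(\<lambda>n. (norm (x - m n))^2) \<longlonglongrightarrow> (norm (x - p))^2" using p by (intro tendsto_intros)
  moreover have "(\<lambda>n. d + 1/(real n + 1)) \<longlonglongrightarrow> d + 0"
  proof -
    have "(\<lambda>n. 1/(real n + 1)) \<longlonglongrightarrow> 0"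
      using LIMSEQ_inverse_real_of_nat by (simp add: inverse_eq_divide add.commute)
    then show ?thesis by (intro tendsto_intros)
  qed
  ultimately have "(norm (x - p))^2 \<le> d"
    using m(2) by (intro LIMSEQ_le) (auto intro: less_imp_le)
  then have pmin: "(norm (x - p))^2 \<le> (norm (x - y))^2" if "y \<in> M" for y using dle[OF that] by linarith
  have "inner (x - p) y = 0" if y: "y \<in> M" for y
  proof (rule real_aux[of "inner y y"])
    show "inner y y \<ge> 0" by simp
    fix t :: real
    have "p + t *\<^sub>R y \<in> M" using pM y sub subspace_add subspace_scale by blast
    then have "(norm (x - p))^2 \<le> (norm ((x - p) - t *\<^sub>R y))^2" using pmin by (simp add: algebra_simps)
    moreover have "(norm ((x - p) - t *\<^sub>R y))^2 = (norm (x - p))^2 - 2*t*inner (x - p) y + t^2 * inner y y"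
    proof -
      define w where "w = x - p"
      show ?thesis unfolding w_def[symmetric]
        by (simp only: power2_norm_eq_inner) (simp add: inner_diff_left inner_diff_right inner_commute[of y w] power2_eq_square algebra_simps)
    qed
    ultimately show "2*t*inner (x - p) y \<le> t^2 * inner y y" by smt
  qed
  then show ?thesis using pM by blast
qed

lemma riesz:
  fixes \<phi> :: "'a::{real_inner,complete_space} \<Rightarrow> real"
  assumes lin: "linear \<phi>" and cont: "continuous_on UNIV \<phi>"
  shows "\<exists>p. \<forall>u. inner p u = \<phi> u"
proof (cases "\<forall>u. \<phi> u = 0")
  case True then show ?thesis by (intro exI[of _ 0]) simp
next
  case False
  then obtain z where z: "\<phi> z \<noteq> 0" by blast
  define N where "N = {x. \<phi> x = 0}"
  have clN: "closed N" unfolding N_def using cont by (intro closed_Collect_eq) auto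
  have subN: "subspace N" unfolding N_def subspace_def using lin
    by (simp add: linear_add linear_0 linear_scale)
  obtain m where m: "m \<in> N" "\<forall>y\<in>N. inner (z - m) y = 0" using projection_exists[OF clN subN] by blast
  define q where "q = z - m"
  have fq: "\<phi> q = \<phi> z" using m(1) lin unfolding q_def N_def by (simp add: linear_diff)
  have qq: "inner q q \<noteq> 0" using fq z lin by (auto simp: linear_0)
  have key: "inner q u = (\<phi> u / \<phi> q) * inner q q" for u
  proof -
    have "u - (\<phi> u / \<phi> q) *\<^sub>R q \<in> N" unfolding N_def using lin fq z
      by (simp add: linear_diff linear_scale)
    then have "inner q (u - (\<phi> u / \<phi> q) *\<^sub>R q) = 0" using m(2) unfolding q_def by blast
    then show ?thesis by (simp add: inner_diff_right)
  qed
  show ?thesis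
  proof (intro exI allI)
    fix u
    have "inner ((\<phi> q / inner q q) *\<^sub>R q) u = (\<phi> q / inner q q) * ((\<phi> u / \<phi> q) * inner q q)"
      by (simp only: inner_scaleR_left key[of u])
    also have "\<dots> = \<phi> u" using qq fq z by (simp add: field_simps)
    finally show "inner ((\<phi> q / inner q q) *\<^sub>R q) u = \<phi> u" .
  qed
qed

lemma cont_eta_comp:
  assumes "continuous_map euclidean (weak_star (cdual (UNIV::'x::{real_vector,topological_space} set))) (\<lambda>v w. \<eta> w v)"
  shows "continuous_on UNIV (\<lambda>v::'x. \<eta> w v)"
proof -
  have "continuous_map euclidean (product_topology (\<lambda>_. euclideanreal) UNIV) (\<lambda>v w. \<eta> w v)"
    using assms unfolding weak_star_def continuous_map_in_subtopology by blast
  then have "continuous_map euclidean euclideanreal (\<lambda>v. \<eta> w v)"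
    unfolding continuous_map_componentwise_UNIV by blast
  then show ?thesis by simp
qed

lemma key_cont:
  fixes \<eta> :: "'x::{real_vector,topological_space} \<Rightarrow> 'x \<Rightarrow> real"
    and j :: "'x \<Rightarrow> 'h::{real_inner,complete_space}"
  assumes X_barreled: "barreled TYPE('x)"
    and eta_cont: "continuous_map euclidean (weak_star (cdual (UNIV::'x set))) (\<lambda>v w. \<eta> w v)"
    and compl: "is_completion \<eta> j"
  shows "(\<lambda>v. inner (j v) p) \<in> cdual (UNIV::'x set)"
proof -
  have lj: "linear j" and ej: "\<And>v w. \<eta> v w = inner (j v) (j w)" using compl unfolding is_completion_def by auto
  have tv: "tvs TYPE('x)" using X_barreled unfolding barreled_def by blast
  have cadd: "continuous_on UNIV (\<lambda>p::'x \<times> 'x. fst p + snd p)"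
    and cmul: "continuous_on UNIV (\<lambda>p::real \<times> 'x. fst p *\<^sub>R snd p)" using tv unfolding tvs_def by auto
  define B where "B = {v. norm (j v) \<le> 1}"
  have Beq: "B = (\<Inter>w. {v. \<eta> w v \<le> norm (j w)})"
  proof (intro set_eqI iffI)
    fix v assume "v \<in> B"
    then have nv: "norm (j v) \<le> 1" unfolding B_def by simp
    show "v \<in> (\<Inter>w. {v. \<eta> w v \<le> norm (j w)})"
    proof (clarsimp)
      fix w
      have "\<eta> w v \<le> norm (j w) * norm (j v)" unfolding ej by (rule norm_cauchy_schwarz)
      also have "\<dots> \<le> norm (j w) * 1" using nv by (intro mult_left_mono) auto
      finally show "\<eta> w v \<le> norm (j w)" by simp
    qed
  next
    fix v assume "v \<in> (\<Inter>w. {v. \<eta> w v \<le> norm (j w)})"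
    then have "\<eta> v v \<le> norm (j v)" by blast
    then have h: "norm (j v) * norm (j v) \<le> norm (j v)" unfolding ej by (simp add: power2_eq_square[symmetric] power2_norm_eq_inner)
    show "v \<in> B"
    proof (cases "norm (j v) = 0")
      case True then show ?thesis unfolding B_def by simp
    next
      case False then have "norm (j v) > 0" by simp
      then show ?thesis unfolding B_def using h by (simp add: mult_le_cancel_right1)
    qed
  qed
  have barB: "barrel B" unfolding barrel_def
  proof (intro conjI)
    show "closed B" unfolding Beq
      by (intro closed_INT ballI closed_Collect_le cont_eta_comp[OF eta_cont] continuous_on_const)
    show "convex B" unfolding convex_def B_def
    proof (clarsimp)
      fix x y :: 'x and u v :: real
      assume h: "norm (j x) \<le> 1" "norm (j y) \<le> 1" "0 \<le> u" "0 \<le> v" "u + v = 1"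
      have "norm (j (u *\<^sub>R x + v *\<^sub>R y)) = norm (u *\<^sub>R j x + v *\<^sub>R j y)" using lj by (simp add: linear_add linear_scale)
      also have "\<dots> \<le> u * norm (j x) + v * norm (j y)" using h
        by (metis (no_types, lifting) abs_of_nonneg norm_scaleR norm_triangle_ineq)
      also have "\<dots> \<le> u * 1 + v * 1" using h by (intro add_mono mult_left_mono) auto
      finally show "norm (j (u *\<^sub>R x + v *\<^sub>R y)) \<le> 1" using h by simp
    qed
    show "\<forall>x\<in>B. \<forall>c::real. \<bar>c\<bar> \<le> 1 \<longrightarrow> c *\<^sub>R x \<in> B"
    proof (clarsimp simp: B_def)
      fix x :: 'x and c :: real assume "norm (j x) \<le> 1" "\<bar>c\<bar> \<le> 1"
      then have "\<bar>c\<bar> * norm (j x) \<le> 1 * 1" by (intro mult_mono) auto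
      then show "norm (j (c *\<^sub>R x)) \<le> 1" using lj by (simp add: linear_scale)
    qed
    show "\<forall>x. \<exists>r>0. \<forall>c::real. \<bar>c\<bar> \<le> r \<longrightarrow> c *\<^sub>R x \<in> B"
    proof
      fix x
      define r where "r = 1 / (norm (j x) + 1)"
      have rpos: "r > 0" unfolding r_def by (simp add: add_nonneg_pos)
      have "\<forall>c::real. \<bar>c\<bar> \<le> r \<longrightarrow> c *\<^sub>R x \<in> B"
      proof (clarsimp simp: B_def)
        fix c :: real assume c: "\<bar>c\<bar> \<le> r"
        have "\<bar>c\<bar> * norm (j x) \<le> r * norm (j x)" using c by (intro mult_right_mono) auto
        also have "\<dots> \<le> 1" unfolding r_def using norm_ge_zero[of "j x"] by (simp add: divide_le_eq) (smt (verit) norm_ge_zero)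
        finally show "norm (j (c *\<^sub>R x)) \<le> 1" using lj by (simp add: linear_scale)
      qed
      then show "\<exists>r>0. \<forall>c::real. \<bar>c\<bar> \<le> r \<longrightarrow> c *\<^sub>R x \<in> B" using rpos by blast
    qed
  qed
  obtain U where U: "open U" "0 \<in> U" "U \<subseteq> B" using X_barreled barB unfolding barreled_def by blast
  define u where "u = (\<lambda>v. inner (j v) p)"
  have cu: "continuous_on UNIV u"
    unfolding continuous_on_topological
  proof (intro ballI allI impI)
    fix x :: 'x and Bo :: "real set" assume Bo: "open Bo" "u x \<in> Bo"
    then obtain e where e: "e > 0" "\<forall>z. dist z (u x) < e \<longrightarrow> z \<in> Bo" unfolding open_dist by blast
      define K where "K = norm p + 1"
      have Kpos: "K > 0" unfolding K_def by (smt (verit) norm_ge_zero)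
      define g where "g = (\<lambda>y. (K / e) *\<^sub>R (y + (- x)))"
      have c1: "continuous_on UNIV (\<lambda>y::'x. y + (- x))"
      proof -
        have "continuous_on UNIV (\<lambda>y. (\<lambda>p::'x \<times> 'x. fst p + snd p) ((\<lambda>y. (y, - x)) y))"
          by (rule continuous_on_compose2[OF cadd]) (auto intro!: continuous_intros)
        then show ?thesis by (simp only: fst_conv snd_conv)
      qed
      have cg: "continuous_on UNIV g"
      proof -
        have "continuous_on UNIV (\<lambda>y. (\<lambda>p::real \<times> 'x. fst p *\<^sub>R snd p) ((\<lambda>y. (K / e, y + (- x))) y))"
          by (rule continuous_on_compose2[OF cmul], rule continuous_on_Pair[OF continuous_on_const c1], simp)
        then show ?thesis unfolding g_def by (simp only: fst_conv snd_conv)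
      qed
      have oS: "open (g -` U)" using continuous_on_open_vimage[of UNIV g] cg U(1) by simp
      have xS: "x \<in> g -` U" using U(2) unfolding g_def by simp
      have "\<forall>y\<in>g -` U. dist (u y) (u x) < e"
      proof
        fix y assume "y \<in> g -` U"
        then have "g y \<in> B" using U(3) by blast
        then have "norm (j (g y)) \<le> 1" unfolding B_def by simp
        moreover have "j (g y) = (K / e) *\<^sub>R (j y - j x)" unfolding g_def using lj
          by (simp add: linear_scale linear_add linear_uminus linear_diff)
        ultimately have "(K / e) * norm (j y - j x) \<le> 1" using Kpos e by simp
        then have n1: "norm (j y - j x) \<le> e / K" using Kpos e by (simp add: field_simps)
        have "dist (u y) (u x) = \<bar>inner (j y - j x) p\<bar>" unfolding u_def dist_real_def by (simp add: inner_diff_left)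
        also have "\<dots> \<le> norm (j y - j x) * norm p" by (rule Cauchy_Schwarz_ineq2)
        also have "\<dots> \<le> (e / K) * norm p" using n1 by (intro mult_right_mono) auto
        also have "\<dots> < e"
        proof -
          have "(e / K) * norm p = e * (norm p / K)" by simp
          moreover have "norm p / K < 1" using Kpos unfolding K_def by simp
          ultimately show ?thesis using e by (metis mult.right_neutral mult_strict_left_mono)
        qed
        finally show "dist (u y) (u x) < e" .
      qed
    then show "\<exists>A. open A \<and> x \<in> A \<and> (\<forall>y\<in>UNIV. y \<in> A \<longrightarrow> u y \<in> Bo)"
      using oS xS e(2) by blast
  qed
  show ?thesis unfolding cdual_def u_def[symmetric]
  proof (intro CollectI conjI ballI allI impI cu)
    fix x y a b
    show "u (a *\<^sub>R x + b *\<^sub>R y) = a * u x + b * u y" unfolding u_def using lj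
      by (simp add: linear_add linear_scale inner_add_left)
  qed auto
qed

lemma restr_cdual:
  assumes "u \<in> cdual (UNIV::'x::{real_vector,topological_space} set)" "subspace S"
  shows "restr S u \<in> cdual S"
proof -
  have lin: "u (a *\<^sub>R x + b *\<^sub>R y) = a * u x + b * u y" for a b x y using assms(1) unfolding cdual_def by blast
  have cu: "continuous_on UNIV u" using assms(1) unfolding cdual_def by blast
  have "continuous_on S (restr S u)"
    using continuous_on_subset[OF cu subset_UNIV] by (rule continuous_on_eq) (simp add: restr_def)
  moreover have "restr S u (a *\<^sub>R x + b *\<^sub>R y) = a * restr S u x + b * restr S u y" if "x \<in> S" "y \<in> S" for a b x y
  proof -
    have "a *\<^sub>R x + b *\<^sub>R y \<in> S" using that assms(2) subspace_add subspace_scale by blast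
    then show ?thesis using that lin by (simp add: restr_def)
  qed
  ultimately show ?thesis unfolding cdual_def by (auto simp: restr_def)
qed

lemma cstar_gen_mono: "S \<subseteq> S' \<Longrightarrow> cstar_gen J S \<subseteq> cstar_gen J S'"
  unfolding cstar_gen_def by (rule Inter_anti_mono) blast

lemma commutant_anti: "S \<subseteq> S' \<Longrightarrow> commutant J S' \<subseteq> commutant J S"
  unfolding commutant_def by blast

lemma cyclic_mono: "A \<subseteq> A' \<Longrightarrow> cyclic_vector A \<xi> \<Longrightarrow> cyclic_vector A' \<xi>"
  unfolding cyclic_vector_def by (metis closure_mono image_mono top.extremum_uniqueI)

lemma inner_unique: fixes p q :: "'a::real_inner" shows "(\<forall>u. inner p u = inner q u) \<Longrightarrow> p = q"
  by (metis inner_diff_left inner_eq_zero_iff right_minus_eq)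

theorem corollary2p3:
  fixes \<sigma> \<eta> :: "'x::{real_vector,topological_space} \<Rightarrow> 'x \<Rightarrow> real"
    and Xbulk :: "'x set"
    and bd :: "('x \<Rightarrow> real) \<Rightarrow> ('b::{real_vector,topological_space} \<Rightarrow> real)"
    and j :: "'x \<Rightarrow> 'h::{real_inner,complete_space}"
    and \<sigma>c :: "'h \<Rightarrow> 'h \<Rightarrow> real"
    and J :: "'k::{real_inner,complete_space} \<Rightarrow>\<^sub>L 'k"
    and W :: "'h \<Rightarrow> ('k \<Rightarrow>\<^sub>L 'k)"
  assumes X_barreled: "barreled TYPE('x)"
    and Xbd_tvs: "tvs TYPE('b)"
    and sympl: "symplectic_form \<sigma>"
    and bulk_sub: "subspace Xbulk"
    and bd_maps: "\<forall>u\<in>cdual Xbulk. bd u \<in> cdual (UNIV::'b set)"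
    and bd_linear: "\<forall>u\<in>cdual Xbulk. \<forall>u'\<in>cdual Xbulk. \<forall>a b::real.
                      bd (\<lambda>x. a * u x + b * u' x) = (\<lambda>f. a * bd u f + b * bd u' f)"
    and bd_cont: "continuous_map (weak_star (cdual (UNIV::'x set))) (weak_star (cdual (UNIV::'b set)))
                    (\<lambda>u. bd (restr Xbulk u))"
    and eta_pos: "strictly_pos_sym_form \<eta>"
    and eta_bound: "\<forall>v1 v2. \<bar>\<sigma> v1 v2\<bar> \<le> sqrt (\<eta> v1 v1) * sqrt (\<eta> v2 v2)"
    and eta_cont: "continuous_map euclidean (weak_star (cdual (UNIV::'x set))) (\<lambda>v w. \<eta> w v)"
    and bd_inj: "\<forall>u\<in>cdual (UNIV::'x set). bd (restr Xbulk u) = (\<lambda>_. 0) \<longrightarrow> (\<forall>x\<in>Xbulk. u x = 0)"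
    and compl: "is_completion \<eta> j"
    and sigma_ext: "bounded_bilinear \<sigma>c" "\<forall>v w. \<sigma>c (j v) (j w) = \<sigma> v w"
    and cstr: "complex_structure J"
    and rep: "weyl_rep J \<sigma>c W"
  shows "pi_ccr J W (closure (j ` Xbulk))
           \<subseteq> pi_ccr J W (closure (range (bdry_dual j Xbulk bd)))
       \<and> commutant J (commutant J (pi_ccr J W (closure (j ` Xbulk))))
           \<subseteq> commutant J (commutant J (pi_ccr J W (closure (range (bdry_dual j Xbulk bd)))))
       \<and> (\<forall>\<xi>. cyclic_vector (pi_ccr J W (closure (j ` Xbulk))) \<xi>
              \<longrightarrow> cyclic_vector (pi_ccr J W (closure (range (bdry_dual j Xbulk bd)))) \<xi>)"
proof -
  define \<Phi> where "\<Phi> = (\<lambda>(p::'h) (v::'x). inner (j v) p)"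
  have \<Phi>c: "\<Phi> p \<in> cdual UNIV" for p unfolding \<Phi>_def by (rule key_cont[OF X_barreled eta_cont compl])
  have \<Phi>r: "restr Xbulk (\<Phi> p) \<in> cdual Xbulk" for p by (rule restr_cdual[OF \<Phi>c bulk_sub])
  define \<phi> where "\<phi> = (\<lambda>f u. bd (restr Xbulk (\<Phi> u)) f)"
  have \<phi>lin2: "\<phi> f (a *\<^sub>R u1 + b *\<^sub>R u2) = a * \<phi> f u1 + b * \<phi> f u2" for f a b u1 u2
  proof -
    have "restr Xbulk (\<Phi> (a *\<^sub>R u1 + b *\<^sub>R u2)) = (\<lambda>x. a * restr Xbulk (\<Phi> u1) x + b * restr Xbulk (\<Phi> u2) x)"
      by (auto simp: restr_def \<Phi>_def inner_add_right)
    then show ?thesis unfolding \<phi>_def using bd_linear \<Phi>r by simp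
  qed
  have \<phi>lin: "linear (\<phi> f)" for f
    by (rule linearI) (use \<phi>lin2[of f 1 _ 1] \<phi>lin2[of f _ _ 0] in auto)
  have c1a: "continuous_map euclidean (product_topology (\<lambda>_. euclideanreal) UNIV) \<Phi>"
    unfolding continuous_map_componentwise_UNIV \<Phi>_def by (auto intro!: continuous_intros)
  have c1b: "\<Phi> ` topspace euclidean \<subseteq> cdual UNIV" using \<Phi>c by blast
  have c1: "continuous_map euclidean (weak_star (cdual UNIV)) \<Phi>"
    unfolding weak_star_def continuous_map_in_subtopology using c1a c1b by blast
  have c2: "continuous_map euclidean (weak_star (cdual (UNIV::'b set))) (\<lambda>u. bd (restr Xbulk (\<Phi> u)))"
    using continuous_map_compose[OF c1 bd_cont] by (simp add: o_def)
  have \<phi>cont: "continuous_on UNIV (\<phi> f)" for f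
  proof -
    have "continuous_map euclidean (product_topology (\<lambda>_. euclideanreal) UNIV) (\<lambda>u. bd (restr Xbulk (\<Phi> u)))"
      using c2 unfolding weak_star_def continuous_map_in_subtopology by blast
    then have "continuous_map euclidean euclideanreal (\<phi> f)"
      unfolding continuous_map_componentwise_UNIV \<phi>_def by blast
    then show ?thesis by simp
  qed
  define dd where "dd = bdry_dual j Xbulk bd"
  have ddprop: "\<forall>u. inner (dd f) u = \<phi> f u" for f
  proof -
    obtain p where p: "\<forall>u. inner p u = \<phi> f u" using riesz[OF \<phi>lin \<phi>cont] by blast
    have "\<exists>!p. \<forall>u. inner p u = \<phi> f u"
      using p inner_unique by (metis (no_types, lifting))
    then have "\<forall>u. inner (THE p. \<forall>u. inner p u = \<phi> f u) u = \<phi> f u" by (rule theI')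
    then show ?thesis unfolding dd_def bdry_dual_def \<phi>_def \<Phi>_def .
  qed
  have bdlin: "\<phi> (a *\<^sub>R f + b *\<^sub>R g) u = a * \<phi> f u + b * \<phi> g u" for a b f g u
  proof -
    have "bd (restr Xbulk (\<Phi> u)) \<in> cdual UNIV" using bd_maps \<Phi>r by blast
    then show ?thesis unfolding \<phi>_def cdual_def by blast
  qed
  have ddlin: "dd (a *\<^sub>R f + b *\<^sub>R g) = a *\<^sub>R dd f + b *\<^sub>R dd g" for a b f g
    by (rule inner_unique) (simp add: ddprop bdlin inner_add_left)
  have subR: "subspace (range dd)" unfolding subspace_def
  proof (intro conjI ballI allI)
    have "dd (0 *\<^sub>R 0 + 0 *\<^sub>R 0) = 0" using ddlin[of 0 0 0 0] by simp
    then show "0 \<in> range dd" by (metis rangeI)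
  next
    fix x y assume "x \<in> range dd" "y \<in> range dd"
    then obtain f g where "x = dd f" "y = dd g" by blast
    then show "x + y \<in> range dd" using ddlin[of 1 f 1 g] by (metis rangeI scaleR_one)
  next
    fix c :: real and x assume "x \<in> range dd"
    then obtain f where "x = dd f" by blast
    then show "c *\<^sub>R x \<in> range dd" using ddlin[of c f 0 f] by (metis rangeI scaleR_zero_left add.right_neutral)
  qed
  define M where "M = closure (range dd)"
  have subM: "subspace M" unfolding M_def by (rule closure_subspace[OF subR])
  have clM: "closed M" unfolding M_def by simp
  have jin: "j x \<in> M" if x: "x \<in> Xbulk" for x
  proof -
    obtain m where m: "m \<in> M" "\<forall>y\<in>M. inner (j x - m) y = 0" using projection_exists[OF clM subM] by blast
    define q where "q = j x - m"
    have "\<phi> f q = 0" for f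
    proof -
      have "dd f \<in> M" unfolding M_def by (meson closure_subset rangeI subsetD)
      then have "inner q (dd f) = 0" unfolding q_def using m(2) by blast
      then show ?thesis using ddprop[of f] by (metis inner_commute)
    qed
    then have "bd (restr Xbulk (\<Phi> q)) = (\<lambda>_. 0)" unfolding \<phi>_def by (simp add: fun_eq_iff)
    then have "\<forall>x\<in>Xbulk. \<Phi> q x = 0" using bd_inj \<Phi>c by blast
    then have h1: "inner (j x) q = 0" using x unfolding \<Phi>_def by simp
    have h2: "inner m q = 0" using m unfolding q_def by (metis inner_commute)
    have "inner q q = inner (j x) q - inner m q" unfolding q_def by (simp only: inner_diff_left)
    then have "inner q q = 0" using h1 h2 by simp
    then have "q = 0" by simp
    then show ?thesis using m(1) unfolding q_def by simp
  qed
  have sub: "closure (j ` Xbulk) \<subseteq> closure (range (bdry_dual j Xbulk bd))"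
    using jin clM unfolding M_def dd_def by (intro closure_minimal) auto
  have P1: "pi_ccr J W (closure (j ` Xbulk)) \<subseteq> pi_ccr J W (closure (range (bdry_dual j Xbulk bd)))"
    unfolding pi_ccr_def by (intro cstar_gen_mono image_mono sub)
  show ?thesis
    using P1 commutant_anti[OF commutant_anti[OF P1]] cyclic_mono[OF P1] by blast
qed

end
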